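(* Let $n\ge2$ be even, let $Q(x)=\sum_{i=1}^{n/2-1}Tr_1^n(x^{2^i+1})+Tr_1^{n/2}(x^{2^{n/2}+1})$ on $\mathbb{F}_{2^n}$, and let $f:\mathbb{F}_{2^n}\to\mathbb{F}_2$. Then $f$ is bent-negabent if and only if $f+Q$ is bent-negabent.
   Context: $Tr_1^m(z)=z+z^2+\dots+z^{2^{m-1}}$; $Tr=Tr_1^n$. Fix a self-dual basis $\{\alpha_i\}$ of $\mathbb{F}_{2^n}$ over $\mathbb{F}_2$ ($Tr(\alpha_i\alpha_j)=\delta_{ij}$), identify $\mathbb{F}_{2^n}$ with $\mathbb{F}_2^n$ via coordinates, and let $wt(x)$ be the number of nonzero coordinates. For $g:\mathbb{F}_{2^n}\to\mathbb{F}_2$: $g$ is bent if $\left|\sum_x(-1)^{g(x)+Tr(\mu x)}\right|=2^{n/2}$ for all $\mu$; negabent if $\left|\sum_x(-1)^{g(x)+Tr(\mu x)}\mathrm{i}^{wt(x)}\right|=2^{n/2}$ for all $\mu$ ($\mathrm{i}=\sqrt{-1}$); bent-negabent if both. *)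

theory Defs
  imports Complex_Main
begin

definition tr :: "nat \<Rightarrow> 'a::field \<Rightarrow> 'a" where
  "tr m z = (\<Sum>k<m. z ^ (2 ^ k))"

text \<open>(-1)^b for b in F_2 (viewed as the prime subfield {0,1} of the field).\<close>
definition sgn2 :: "'a::field \<Rightarrow> complex" where
  "sgn2 b = (if b = 0 then 1 else -1)"

definition self_dual_basis :: "nat \<Rightarrow> (nat \<Rightarrow> 'a::field) \<Rightarrow> bool" where
  "self_dual_basis n \<alpha> \<longleftrightarrow>
     (\<forall>i<n. \<forall>j<n. tr n (\<alpha> i * \<alpha> j) = (if i = j then 1 else 0))"

definition coords :: "nat \<Rightarrow> (nat \<Rightarrow> 'a::field) \<Rightarrow> 'a \<Rightarrow> nat \<Rightarrow> bool" where
  "coords n \<alpha> x = (THE c. (\<forall>i. i \<ge> n \<longrightarrow> \<not> c i) \<and>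
                       x = (\<Sum>i<n. if c i then \<alpha> i else 0))"

definition wt :: "nat \<Rightarrow> (nat \<Rightarrow> 'a::field) \<Rightarrow> 'a \<Rightarrow> nat" where
  "wt n \<alpha> x = card {i. i < n \<and> coords n \<alpha> x i}"

definition walsh :: "nat \<Rightarrow> ('a::{field,finite} \<Rightarrow> 'a) \<Rightarrow> 'a \<Rightarrow> complex" where
  "walsh n g \<mu> = (\<Sum>x\<in>UNIV. sgn2 (g x + tr n (\<mu> * x)))"

definition nega_walsh :: "nat \<Rightarrow> (nat \<Rightarrow> 'a::{field,finite}) \<Rightarrow> ('a \<Rightarrow> 'a) \<Rightarrow> 'a \<Rightarrow> complex" where
  "nega_walsh n \<alpha> g \<mu> = (\<Sum>x\<in>UNIV. sgn2 (g x + tr n (\<mu> * x)) * \<i> ^ wt n \<alpha> x)"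

definition bent :: "nat \<Rightarrow> ('a::{field,finite} \<Rightarrow> 'a) \<Rightarrow> bool" where
  "bent n g \<longleftrightarrow> (\<forall>\<mu>. cmod (walsh n g \<mu>) = sqrt (2 ^ n))"

definition negabent :: "nat \<Rightarrow> (nat \<Rightarrow> 'a::{field,finite}) \<Rightarrow> ('a \<Rightarrow> 'a) \<Rightarrow> bool" where
  "negabent n \<alpha> g \<longleftrightarrow> (\<forall>\<mu>. cmod (nega_walsh n \<alpha> g \<mu>) = sqrt (2 ^ n))"

definition bent_negabent :: "nat \<Rightarrow> (nat \<Rightarrow> 'a::{field,finite}) \<Rightarrow> ('a \<Rightarrow> 'a) \<Rightarrow> bool" where
  "bent_negabent n \<alpha> g \<longleftrightarrow> bent n g \<and> negabent n \<alpha> g"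

definition Qfun :: "nat \<Rightarrow> 'a::field \<Rightarrow> 'a" where
  "Qfun n x = (\<Sum>i\<in>{1..<n div 2}. tr n (x ^ (2 ^ i + 1)))
              + tr (n div 2) (x ^ (2 ^ (n div 2) + 1))"

end

theory Submission
  imports Defs
begin

lemma fermat_gen:
  fixes x :: "'a::{field,finite}"
  shows "x ^ card (UNIV::'a set) = x"
proof (cases "x = 0")
  case True
  have "card (UNIV::'a set) > 0" by (simp add: finite_UNIV_card_ge_0)
  then show ?thesis using True by (simp add: power_0_left)
next
  case False
  let ?U = "UNIV - {0::'a}"
  have bij: "bij_betw (\<lambda>y. x * y) ?U ?U"
    unfolding bij_betw_def
  proof
    show "inj_on ((*) x) ?U" using False by (auto simp: inj_on_def)
    show "(*) x ` ?U = ?U"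
    proof
      show "(*) x ` ?U \<subseteq> ?U" using False by auto
      show "?U \<subseteq> (*) x ` ?U"
      proof
        fix z assume "z \<in> ?U"
        then have "z = x * (z / x)" "z / x \<in> ?U" using False by auto
        then show "z \<in> (*) x ` ?U" by blast
      qed
    qed
  qed
  have "prod (\<lambda>y. x * y) ?U = prod id ?U"
    using prod.reindex_bij_betw[OF bij, of id] by simp
  moreover have "prod (\<lambda>y. x * y) ?U = x ^ card ?U * prod id ?U"
    by (simp add: prod.distrib)
  moreover have "prod id ?U \<noteq> 0" by (simp add: prod_zero_iff)
  ultimately have "x ^ card ?U = 1" by simp
  moreover have "card ?U = card (UNIV::'a set) - 1" by (simp add: card_Diff_singleton)
  moreover have "card (UNIV::'a set) > 0" by (simp add: finite_UNIV_card_ge_0)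
  ultimately show ?thesis
    by (metis Suc_diff_1 mult.right_neutral power_Suc)
qed


lemma int_sq_lemma: "(a::int)^2 + b^2 = 2 * 4^k \<Longrightarrow> a^2 = 4^k"
proof (induction k arbitrary: a b)
  case 0
  then have s: "a^2 + b^2 = 2" by simp
  have a2: "a^2 \<le> 2" using s zero_le_power2[of b] by linarith
  have b2: "b^2 \<le> 2" using s zero_le_power2[of a] by linarith
  have "\<bar>a\<bar> \<le> 1"
  proof (rule ccontr)
    assume "\<not> \<bar>a\<bar> \<le> 1"
    then have "2 \<le> \<bar>a\<bar>" by simp
    then have "2^2 \<le> \<bar>a\<bar>^2" by (rule power_mono) simp
    then show False using a2 by simp
  qed
  moreover have "\<bar>b\<bar> \<le> 1"
  proof (rule ccontr)
    assume "\<not> \<bar>b\<bar> \<le> 1"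
    then have "2 \<le> \<bar>b\<bar>" by simp
    then have "2^2 \<le> \<bar>b\<bar>^2" by (rule power_mono) simp
    then show False using b2 by simp
  qed
  ultimately have "a \<in> {-1,0,1}" "b \<in> {-1,0,1}" by auto
  then show ?case using s by auto
next
  case (Suc k)
  have e: "a^2 + b^2 = 4 * (2 * 4^k)" using Suc.prems by simp
  have ev: "even a \<and> even b"
  proof (rule ccontr)
    assume "\<not> (even a \<and> even b)"
    then consider "odd a" "odd b" | "odd a" "even b" | "even a" "odd b" by blast
    then show False
    proof cases
      case 1
      then obtain p q where "a = 2*p+1" "b = 2*q+1" by (metis oddE)
      then have "a^2 + b^2 = 4*(p^2+p+q^2+q) + 2" by (simp add: power2_eq_square algebra_simps)
      then show False using e by presburger
    next
      case 2
      then have "odd (a^2 + b^2)" by simp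
      then show False using e by simp
    next
      case 3
      then have "odd (a^2 + b^2)" by simp
      then show False using e by simp
    qed
  qed
  then obtain p q where pq: "a = 2*p" "b = 2*q" by (metis evenE)
  then have "p^2 + q^2 = 2 * 4^k" using e by (simp add: power2_eq_square)
  then have "p^2 = 4^k" by (rule Suc.IH)
  then show ?case using pq by (simp add: power2_eq_square)
qed

lemma cmod_int_iff: "cmod (of_int a) = sqrt (2 ^ n) \<longleftrightarrow> a^2 = 2^n"
proof -
  have "cmod (of_int a) = sqrt (real_of_int (a^2))"
    by (simp add: real_sqrt_abs)
  then show ?thesis by (metis of_int_eq_iff of_int_numeral of_int_power real_sqrt_eq_iff)
qed

lemma cmod_mix_iff:
  "cmod ((1 + \<i>) / 2 * of_int a + (1 - \<i>) / 2 * of_int b) = sqrt (2 ^ n) \<longleftrightarrow> a^2 + b^2 = 2^(n+1)"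
proof -
  have "(1 + \<i>) / 2 * of_int a + (1 - \<i>) / 2 * of_int b = Complex ((a + b) / 2) ((a - b) / 2)"
    by (simp add: complex_eq_iff)
  then have "cmod ((1 + \<i>) / 2 * of_int a + (1 - \<i>) / 2 * of_int b) = sqrt (((a + b) / 2)^2 + ((a - b) / 2)^2)"
    by (simp add: cmod_def)
  also have "((a + b) / 2)^2 + ((a - b) / 2)^2 = real_of_int (a^2 + b^2) / 2"
    by (simp add: power2_eq_square field_simps)
  finally have "cmod ((1 + \<i>) / 2 * of_int a + (1 - \<i>) / 2 * of_int b) = sqrt (real_of_int (a^2 + b^2) / 2)" .
  moreover have "real_of_int (a^2 + b^2) / 2 = 2^n \<longleftrightarrow> a^2 + b^2 = 2^(n+1)"
  proof -
    have "real_of_int (a^2 + b^2) / 2 = 2^n \<longleftrightarrow> real_of_int (a^2 + b^2) = real_of_int (2^(n+1))"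
      by (auto simp: field_simps)
    then show ?thesis by (simp only: of_int_eq_iff)
  qed
  ultimately show ?thesis by simp
qed

locale F2n =
  fixes n :: nat and \<alpha> :: "nat \<Rightarrow> 'a::{field,finite}"
  assumes n2: "n \<ge> 2" and evn: "even n" and cardU: "card (UNIV::'a set) = 2 ^ n"
    and sdb: "self_dual_basis n \<alpha>"
begin

lemma fermat: "(x::'a) ^ (2 ^ n) = x"
  using fermat_gen[of x] cardU by simp

lemma one_one: "(1::'a) + 1 = 0"
proof -
  have "(-1::'a) ^ (2 ^ n) = 1" using evn n2 by (simp add: even_power)
  then have "(-1::'a) = 1" using fermat[of "-1"] by simp
  then show ?thesis by (metis add.right_inverse)
qed

lemma add_self[simp]: "(x::'a) + x = 0"
  by (metis distrib_left mult.right_neutral mult_zero_right one_one)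

lemma neg_eq[simp]: "- (x::'a) = x"
  by (metis add_self add_right_cancel neg_eq_iff_add_eq_0)

lemma minus_eq_plus: "(x::'a) - y = x + y"
  by (metis diff_minus_eq_add neg_eq)

lemma two_zero[simp]: "(2::'a) = 0"
  by (metis one_add_one one_one)

lemma frob2: "((x::'a) + y) ^ 2 = x ^ 2 + y ^ 2"
  by (simp add: power2_sum)

lemma frob: "((x::'a) + y) ^ (2 ^ k) = x ^ (2 ^ k) + y ^ (2 ^ k)"
proof (induction k)
  case 0 then show ?case by simp
next
  case (Suc k)
  have "(x + y) ^ (2 ^ Suc k) = ((x + y) ^ (2 ^ k)) ^ 2"
    by (simp add: power_mult[symmetric] mult.commute)
  also have "\<dots> = (x ^ (2 ^ k)) ^ 2 + (y ^ (2 ^ k)) ^ 2" using Suc frob2 by simp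
  also have "\<dots> = x ^ (2 ^ Suc k) + y ^ (2 ^ Suc k)"
    by (simp add: power_mult[symmetric] mult.commute)
  finally show ?case .
qed

lemma frob_sum: "(sum (f::_\<Rightarrow>'a) S) ^ (2 ^ k) = (\<Sum>i\<in>S. f i ^ (2 ^ k))"
proof (induction S rule: infinite_finite_induct)
  case (infinite A) then show ?case by simp
next
  case empty then show ?case by simp
next
  case (insert x F) then show ?case by (simp add: frob)
qed

lemma pow_shift: "(x::'a) ^ (2 ^ (n + k)) = x ^ (2 ^ k)"
  by (simp add: power_add power_mult fermat)

lemma pow_pow2: "((x::'a) ^ (2 ^ a)) ^ (2 ^ b) = x ^ (2 ^ (a + b))"
  by (simp add: power_add power_mult)

lemma zero_pow2[simp]: "(0::'a) ^ (2 ^ k) = 0"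
  by (simp add: power_0_left)

lemma sq_pow: "((x::'a) ^ (2 ^ k)) ^ 2 = x ^ (2 ^ Suc k)"
  by (simp add: power_mult[symmetric] mult.commute)

lemma tr_add: "tr m ((x::'a) + y) = tr m x + tr m y"
  by (simp add: tr_def frob sum.distrib)

lemma tr_zero[simp]: "tr m (0::'a) = 0"
  by (simp add: tr_def)

lemma tr_sum: "tr m (sum (f::_\<Rightarrow>'a) S) = (\<Sum>i\<in>S. tr m (f i))"
proof (induction S rule: infinite_finite_induct)
  case (infinite A) then show ?case by simp
next
  case empty then show ?case by simp
next
  case (insert x F) then show ?case by (simp add: tr_add)
qed

lemma idem01: "(t::'a) ^ 2 = t \<Longrightarrow> t = 0 \<or> t = 1"
  by (metis power2_eq_square mult_cancel_right1 mult_zero_left)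

lemma tr_sq_gen:
  assumes "(z::'a) ^ (2 ^ m) = z"
  shows "(tr m z) ^ 2 = tr m z"
proof -
  have "(tr m z) ^ 2 = (\<Sum>k<m. z ^ (2 ^ Suc k))"
    using frob_sum[of "\<lambda>k. z ^ (2 ^ k)" "{..<m}" 1]
    by (simp add: tr_def sq_pow)
  also have "\<dots> = tr m z"
  proof -
    have "(\<Sum>k<Suc m. z ^ (2 ^ k)) = z ^ (2 ^ 0) + (\<Sum>k<m. z ^ (2 ^ Suc k))"
      by (rule sum.lessThan_Suc_shift)
    moreover have "(\<Sum>k<Suc m. z ^ (2 ^ k)) = (\<Sum>k<m. z ^ (2 ^ k)) + z ^ (2 ^ m)"
      by simp
    ultimately show ?thesis using assms by (simp add: tr_def)
  qed
  finally show ?thesis .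
qed

lemma tr01: "tr n (x::'a) = 0 \<or> tr n x = 1"
  using idem01 tr_sq_gen fermat by blast

lemma tr_sq: "tr m ((y::'a) ^ 2) = (tr m y) ^ 2"
proof -
  have "(tr m y) ^ 2 = (\<Sum>j<m. (y ^ (2 ^ j)) ^ (2 ^ 1))"
    unfolding tr_def using frob_sum[of "\<lambda>k. y ^ 2 ^ k" "{..<m}" 1] by simp
  also have "\<dots> = tr m (y ^ 2)"
    unfolding tr_def by (intro sum.cong refl) (simp add: power_mult[symmetric] mult.commute)
  finally show ?thesis by simp
qed

lemma tr_pow: "tr n ((x::'a) ^ (2 ^ k)) = tr n x"
proof (induction k)
  case 0 then show ?case by simp
next
  case (Suc k)
  have "tr n (x ^ (2 ^ Suc k)) = tr n ((x ^ (2 ^ k)) ^ 2)" by (simp add: sq_pow)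
  also have "\<dots> = (tr n (x ^ (2 ^ k))) ^ 2" by (rule tr_sq)
  also have "\<dots> = tr n x" using Suc tr_sq_gen fermat by simp
  finally show ?case .
qed

lemma pow01: "(c::'a) = 0 \<or> c = 1 \<Longrightarrow> c ^ (2 ^ k) = c"
  by auto

lemma tr_scal: "(c::'a) = 0 \<or> c = 1 \<Longrightarrow> tr m (c * x) = c * tr m x"
  by (auto simp: tr_def)

lemma sd: "i < n \<Longrightarrow> j < n \<Longrightarrow> tr n (\<alpha> i * \<alpha> j) = (if i = j then 1 else 0)"
  using sdb unfolding self_dual_basis_def by auto

definition E :: "nat set \<Rightarrow> 'a" where "E S = (\<Sum>i\<in>S. \<alpha> i)"

lemma tr_E: "S \<subseteq> {..<n} \<Longrightarrow> j < n \<Longrightarrow> tr n (E S * \<alpha> j) = (if j \<in> S then 1 else 0)"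
proof -
  assume S: "S \<subseteq> {..<n}" and j: "j < n"
  have fin: "finite S" using S finite_subset by blast
  have "tr n (E S * \<alpha> j) = (\<Sum>i\<in>S. tr n (\<alpha> i * \<alpha> j))"
    by (simp add: E_def sum_distrib_right tr_sum)
  also have "\<dots> = (\<Sum>i\<in>S. if i = j then 1 else 0)"
    using S j by (intro sum.cong refl) (auto simp: sd)
  also have "\<dots> = (if j \<in> S then 1 else 0)" using fin by simp
  finally show ?thesis .
qed

lemma E_inj: "inj_on E (Pow {..<n})"
proof (rule inj_onI)
  fix S T assume S: "S \<in> Pow {..<n}" and T: "T \<in> Pow {..<n}" and eq: "E S = E T"
  show "S = T"
  proof (rule set_eqI)
    fix j
    show "j \<in> S \<longleftrightarrow> j \<in> T"
    proof (cases "j < n")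
      case True
      then show ?thesis using tr_E[of S j] tr_E[of T j] S T eq by (auto split: if_splits)
    next
      case False then show ?thesis using S T by auto
    qed
  qed
qed

lemma E_surj: "E ` Pow {..<n} = (UNIV::'a set)"
proof -
  have "card (E ` Pow {..<n}) = 2 ^ n"
    using card_image[OF E_inj] by (simp add: card_Pow)
  then show ?thesis using cardU
    by (metis card_subset_eq finite_class.finite_UNIV subset_UNIV)
qed

definition A :: "'a \<Rightarrow> nat set" where "A x = {j. j < n \<and> tr n (x * \<alpha> j) = 1}"

lemma A_sub: "A x \<subseteq> {..<n}" by (auto simp: A_def)

lemma finA[simp]: "finite (A x)" using A_sub finite_subset by blast

lemma A_E: assumes S: "S \<subseteq> {..<n}" shows "A (E S) = S"
proof (rule set_eqI)
  fix j show "j \<in> A (E S) \<longleftrightarrow> j \<in> S"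
  proof (cases "j < n")
    case True then show ?thesis using tr_E[OF S True] by (simp add: A_def)
  next
    case False then show ?thesis using S by (auto simp: A_def)
  qed
qed

lemma E_A: "E (A x) = x"
proof -
  obtain S where "S \<subseteq> {..<n}" "x = E S" using E_surj by (metis PowD UNIV_I imageE)
  then show ?thesis using A_E by simp
qed

lemma coords_eq: "coords n \<alpha> x = (\<lambda>i. i \<in> A x)"
  unfolding coords_def
proof (rule the_equality)
  show "(\<forall>i. n \<le> i \<longrightarrow> \<not> i \<in> A x) \<and> x = (\<Sum>i<n. if i \<in> A x then \<alpha> i else 0)"
  proof
    show "\<forall>i. n \<le> i \<longrightarrow> \<not> i \<in> A x" using A_sub by force
    have "(\<Sum>i<n. if i \<in> A x then \<alpha> i else 0) = (\<Sum>i\<in>{..<n} \<inter> A x. \<alpha> i)"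
      by (simp add: sum.If_cases Int_def)
    also have "{..<n} \<inter> A x = A x" using A_sub by blast
    finally show "x = (\<Sum>i<n. if i \<in> A x then \<alpha> i else 0)" using E_A by (simp add: E_def)
  qed
next
  fix c assume c: "(\<forall>i. n \<le> i \<longrightarrow> \<not> c i) \<and> x = (\<Sum>i<n. if c i then \<alpha> i else 0)"
  let ?S = "{i. i < n \<and> c i}"
  have "(\<Sum>i<n. if c i then \<alpha> i else 0) = (\<Sum>i\<in>{..<n} \<inter> {i. c i}. \<alpha> i)"
    by (simp add: sum.If_cases)
  also have "{..<n} \<inter> {i. c i} = ?S" by auto
  finally have "x = E ?S" using c by (simp add: E_def)
  then have "A x = ?S" using A_E[of ?S] by auto
  then show "c = (\<lambda>i. i \<in> A x)" using c by (auto simp: not_le[symmetric])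
qed

lemma wt_eq: "wt n \<alpha> x = card (A x)"
  by (simp add: wt_def coords_eq A_def)

lemma A_add: "A (x + y) = (A x - A y) \<union> (A y - A x)"
proof -
  have e: "\<And>j. tr n ((x + y) * \<alpha> j) = tr n (x * \<alpha> j) + tr n (y * \<alpha> j)"
    by (simp add: distrib_right tr_add)
  show ?thesis
  proof (rule set_eqI)
    fix j
    show "j \<in> A (x + y) \<longleftrightarrow> j \<in> (A x - A y) \<union> (A y - A x)"
      unfolding A_def using e[of j] tr01[of "x * \<alpha> j"] tr01[of "y * \<alpha> j"] one_one
      by auto
  qed
qed

lemma tr_alpha_mul: "j < n \<Longrightarrow> tr n (\<alpha> j * y) = (if j \<in> A y then 1 else 0)"
  using tr01[of "y * \<alpha> j"] by (auto simp: A_def mult.commute)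

lemma of_nat_char2: "(of_nat k :: 'a) = (if even k then 0 else 1)"
  by (induction k) (auto simp: one_one)

lemma tr_mul_card: "tr n (x * y) = of_nat (card (A x \<inter> A y))"
proof -
  have "tr n (x * y) = tr n (E (A x) * y)" by (simp add: E_A)
  also have "\<dots> = (\<Sum>i\<in>A x. tr n (\<alpha> i * y))" by (simp add: E_def sum_distrib_right tr_sum)
  also have "\<dots> = (\<Sum>i\<in>A x. if i \<in> A y then 1 else 0)"
    by (intro sum.cong refl tr_alpha_mul) (use A_sub in blast)
  also have "\<dots> = of_nat (card (A x \<inter> A y))"
    by (simp add: sum.If_cases Int_def)
  finally show ?thesis .
qed

lemma card_symdiff: "finite X \<Longrightarrow> finite Y \<Longrightarrow>
   card ((X - Y) \<union> (Y - X)) + 2 * card (X \<inter> Y) = card X + card Y"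
proof -
  assume f: "finite X" "finite Y"
  have "card ((X - Y) \<union> (Y - X)) = card (X - Y) + card (Y - X)"
    using f by (intro card_Un_disjoint) auto
  moreover have "card (X - Y) = card X - card (X \<inter> Y)"
    using f by (simp add: card_Diff_subset_Int)
  moreover have "card (Y - X) = card Y - card (X \<inter> Y)"
    using f by (simp add: card_Diff_subset_Int Int_commute)
  moreover have "card (X \<inter> Y) \<le> card X" "card (X \<inter> Y) \<le> card Y"
    using f by (auto intro: card_mono)
  ultimately show ?thesis by simp
qed

lemma sum_split_add: "(\<Sum>k<(a::nat)+b. f k) = (\<Sum>k<a. f k) + (\<Sum>k<b. f (a + k)::'b::comm_monoid_add)"
  by (induction b) (simp_all add: add.assoc)

lemma sgn2_add: "(a::'a) = 0 \<or> a = 1 \<Longrightarrow> b = 0 \<or> b = 1 \<Longrightarrow> sgn2 (a + b) = sgn2 a * sgn2 b"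
  by (auto simp: sgn2_def one_one)

lemma sgn2_sq[simp]: "sgn2 (a::'a) * sgn2 a = 1"
  by (simp add: sgn2_def)

lemma sgn2_of_nat: "sgn2 (of_nat c :: 'a) = (-1) ^ c"
  by (simp add: sgn2_def of_nat_char2)

lemma add01: "(a::'a) = 0 \<or> a = 1 \<Longrightarrow> b = 0 \<or> b = 1 \<Longrightarrow> a + b = 0 \<or> a + b = 1"
  using one_one by auto

lemma mul01: "(a::'a) = 0 \<or> a = 1 \<Longrightarrow> b = 0 \<or> b = 1 \<Longrightarrow> a * b = 0 \<or> a * b = 1"
  by auto

lemma sum01: "(\<And>i. i \<in> S \<Longrightarrow> f i = 0 \<or> f i = 1) \<Longrightarrow> sum (f::_\<Rightarrow>'a) S = 0 \<or> sum f S = 1"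
proof (induction S rule: infinite_finite_induct)
  case (infinite A) then show ?case by simp
next
  case empty then show ?case by simp
next
  case (insert x F) then show ?case using add01 by simp
qed

lemma ipow_add: "\<i> ^ wt n \<alpha> (x + y) = \<i> ^ wt n \<alpha> x * \<i> ^ wt n \<alpha> y * sgn2 (tr n (x * y))"
proof -
  define w where "w = card (A (x + y))"
  define a where "a = card (A x)"
  define b where "b = card (A y)"
  define c where "c = card (A x \<inter> A y)"
  have wc: "w + 2 * c = a + b"
    unfolding w_def a_def b_def c_def A_add by (rule card_symdiff) auto
  have "\<i> ^ a * \<i> ^ b = \<i> ^ w * (-1) ^ c"
    by (metis power_add wc power_mult power2_i)
  then have "\<i> ^ a * \<i> ^ b * (-1) ^ c = \<i> ^ w * ((-1) ^ c * (-1) ^ c)" by simp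
  also have "(-1::complex) ^ c * (-1) ^ c = 1" by (simp add: power_add[symmetric])
  finally show ?thesis
    by (simp add: wt_eq tr_mul_card sgn2_of_nat w_def a_def b_def c_def)
qed

abbreviation "m \<equiv> n div 2"

lemma nmm: "n = m + m" using evn by auto

lemma m1: "m \<ge> 1" using n2 by auto

lemma tr_n01: "tr n (x::'a) = 0 \<or> tr n x = 1" by (rule tr01)

lemma half01: "tr m ((x::'a) ^ (2 ^ m + 1)) = 0 \<or> tr m (x ^ (2 ^ m + 1)) = 1"
proof -
  have "(x ^ (2 ^ m + 1)) ^ (2 ^ m) = x ^ (2 ^ (m + m)) * x ^ (2 ^ m)"
    by (simp add: power_mult[symmetric] power_add algebra_simps)
  also have "\<dots> = x ^ (2 ^ m + 1)" using fermat nmm by (simp add: power_add)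
  finally show ?thesis using tr_sq_gen idem01 by blast
qed

lemma Q01: "Qfun n (x::'a) = 0 \<or> Qfun n x = 1"
  unfolding Qfun_def by (intro add01 sum01 tr01 half01)

lemma expand: "((x::'a) + y) ^ (2 ^ i + 1) = x ^ (2 ^ i + 1) + y ^ (2 ^ i + 1) + (x ^ (2 ^ i) * y + x * y ^ (2 ^ i))"
  by (simp add: power_add frob algebra_simps)

lemma key1: "i \<le> n \<Longrightarrow> tr n ((x::'a) ^ (2 ^ i) * y) = tr n (x * y ^ (2 ^ (n - i)))"
proof -
  assume i: "i \<le> n"
  have "tr n (x ^ (2 ^ i) * y) = tr n ((x ^ (2 ^ i) * y) ^ (2 ^ (n - i)))" by (rule tr_pow[symmetric])
  also have "(x ^ (2 ^ i) * y) ^ (2 ^ (n - i)) = x ^ (2 ^ (i + (n - i))) * y ^ (2 ^ (n - i))"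
    by (simp add: power_mult_distrib pow_pow2)
  also have "x ^ (2 ^ (i + (n - i))) = x" using i fermat by simp
  finally show ?thesis .
qed

lemma key2: "(\<Sum>i\<in>{1..<m}. tr n ((x::'a) * y ^ (2 ^ (n - i)))) = (\<Sum>j\<in>{m+1..<n}. tr n (x * y ^ (2 ^ j)))"
  by (rule sum.reindex_bij_witness[where i="\<lambda>j. n - j" and j="\<lambda>i. n - i"]) (use nmm in auto)

lemma key3: "tr m ((x::'a) ^ (2 ^ m) * y + x * y ^ (2 ^ m)) = tr n (x * y ^ (2 ^ m))"
proof -
  define w where "w = x * y ^ (2 ^ m)"
  have "tr m (x ^ (2 ^ m) * y) = (\<Sum>k<m. w ^ (2 ^ (m + k)))"
  proof -
    have "\<And>k. (x ^ (2 ^ m) * y) ^ (2 ^ k) = w ^ (2 ^ (m + k))"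
    proof -
      fix k
      have "w ^ (2 ^ (m + k)) = x ^ (2 ^ (m + k)) * y ^ (2 ^ (m + (m + k)))"
        by (simp add: w_def power_mult_distrib pow_pow2)
      also have "y ^ (2 ^ (m + (m + k))) = y ^ (2 ^ k)"
        using pow_shift[of y k] nmm by (simp add: add.assoc[symmetric])
      finally show "(x ^ (2 ^ m) * y) ^ (2 ^ k) = w ^ (2 ^ (m + k))"
        by (simp add: power_mult_distrib pow_pow2)
    qed
    then show ?thesis by (simp add: tr_def)
  qed
  moreover have "tr n w = tr m w + (\<Sum>k<m. w ^ (2 ^ (m + k)))"
    unfolding tr_def using nmm sum_split_add[where a=m and b=m and f="\<lambda>k. w ^ (2 ^ k)"] by simp
  ultimately show ?thesis by (simp add: tr_add w_def add.commute)
qed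

lemma cross: "(\<Sum>j\<in>{1..<n}. tr n ((x::'a) * y ^ (2 ^ j))) = tr n x * tr n y + tr n (x * y)"
proof -
  have "tr n y = y + (\<Sum>j\<in>{1..<n}. y ^ (2 ^ j))"
    using n2 sum.atLeast_Suc_lessThan[of 0 n "\<lambda>j. y ^ (2 ^ j)"]
    by (simp add: tr_def atLeast0LessThan)
  then have e: "(\<Sum>j\<in>{1..<n}. y ^ (2 ^ j)) = tr n y + y"
    by (metis add.left_commute add_self add.right_neutral)
  have "(\<Sum>j\<in>{1..<n}. tr n (x * y ^ (2 ^ j))) = tr n (x * (\<Sum>j\<in>{1..<n}. y ^ (2 ^ j)))"
    by (simp add: tr_sum sum_distrib_left)
  also have "\<dots> = tr n (tr n y * x) + tr n (x * y)"
    unfolding e by (simp add: distrib_left tr_add mult.commute)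
  also have "\<dots> = tr n x * tr n y + tr n (x * y)"
    using tr_scal[OF tr01[of y]] by (simp add: mult.commute)
  finally show ?thesis .
qed

lemma Q_add: "Qfun n ((x::'a) + y) = Qfun n x + Qfun n y + tr n x * tr n y + tr n (x * y)"
proof -
  let ?S = "\<lambda>x. (\<Sum>i\<in>{1..<m}. tr n (x ^ (2 ^ i + 1)))"
  let ?H = "\<lambda>x. tr m (x ^ (2 ^ m + 1))"
  have S: "?S (x + y) = ?S x + ?S y + (\<Sum>i\<in>{1..<m}. tr n (x * y ^ (2 ^ i)))
              + (\<Sum>j\<in>{m+1..<n}. tr n (x * y ^ (2 ^ j)))"
  proof -
    have "?S (x + y) = ?S x + ?S y + (\<Sum>i\<in>{1..<m}. tr n (x ^ (2 ^ i) * y)) + (\<Sum>i\<in>{1..<m}. tr n (x * y ^ (2 ^ i)))"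
      unfolding expand by (simp add: tr_add sum.distrib)
    also have "(\<Sum>i\<in>{1..<m}. tr n (x ^ (2 ^ i) * y)) = (\<Sum>i\<in>{1..<m}. tr n (x * y ^ (2 ^ (n - i))))"
      using nmm by (intro sum.cong refl key1) auto
    also have "\<dots> = (\<Sum>j\<in>{m+1..<n}. tr n (x * y ^ (2 ^ j)))" by (rule key2)
    finally show ?thesis by (simp add: algebra_simps)
  qed
  have H: "?H (x + y) = ?H x + ?H y + tr n (x * y ^ (2 ^ m))"
    using key3[of x y] unfolding expand by (simp add: tr_add)
  have C: "(\<Sum>i\<in>{1..<m}. tr n (x * y ^ (2 ^ i))) + tr n (x * y ^ (2 ^ m))
              + (\<Sum>j\<in>{m+1..<n}. tr n (x * y ^ (2 ^ j))) = (\<Sum>j\<in>{1..<n}. tr n (x * y ^ (2 ^ j)))"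
  proof -
    have "(\<Sum>j\<in>{m..<n}. tr n (x * y ^ (2 ^ j))) = tr n (x * y ^ (2 ^ m)) + (\<Sum>j\<in>{m+1..<n}. tr n (x * y ^ (2 ^ j)))"
      using nmm m1 by (subst sum.atLeast_Suc_lessThan) auto
    moreover have "(\<Sum>i\<in>{1..<m}. tr n (x * y ^ (2 ^ i))) + (\<Sum>j\<in>{m..<n}. tr n (x * y ^ (2 ^ j)))
       = (\<Sum>j\<in>{1..<n}. tr n (x * y ^ (2 ^ j)))"
      using nmm m1 by (intro sum.atLeastLessThan_concat) auto
    ultimately show ?thesis by (simp add: add.assoc)
  qed
  have "Qfun n (x + y) = ?S (x + y) + ?H (x + y)" by (simp add: Qfun_def)
  also have "\<dots> = (?S x + ?H x) + (?S y + ?H y) + ((\<Sum>i\<in>{1..<m}. tr n (x * y ^ (2 ^ i))) + tr n (x * y ^ (2 ^ m))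
              + (\<Sum>j\<in>{m+1..<n}. tr n (x * y ^ (2 ^ j))))"
    unfolding S H by (simp add: algebra_simps)
  also have "\<dots> = Qfun n x + Qfun n y + (tr n x * tr n y + tr n (x * y))"
    unfolding C cross by (simp add: Qfun_def)
  finally show ?thesis by (simp add: add.assoc)
qed

definition B :: "'a \<Rightarrow> bool" where "B x \<longleftrightarrow> x = 0 \<or> x = 1"

lemma B_add[simp]: "B a \<Longrightarrow> B b \<Longrightarrow> B (a + b)"
  unfolding B_def using add01 by blast

lemma B_mul[simp]: "B a \<Longrightarrow> B b \<Longrightarrow> B (a * b)"
  unfolding B_def by auto

lemma B_tr[simp]: "B (tr n x)" unfolding B_def by (rule tr01)

lemma B_Q[simp]: "B (Qfun n x)" unfolding B_def by (rule Q01)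

lemma sgn2_addB[simp]: "B a \<Longrightarrow> B b \<Longrightarrow> sgn2 (a + b) = sgn2 a * sgn2 b"
  unfolding B_def by (rule sgn2_add)

lemma sgn2_nz[simp]: "sgn2 x \<noteq> 0" by (simp add: sgn2_def)

definition \<omega> :: "'a \<Rightarrow> complex" where "\<omega> x = (if tr n x = 0 then 1 else \<i>)"

lemma omega_add: "\<omega> (x + y) = \<omega> x * \<omega> y * sgn2 (tr n x * tr n y)"
  using tr01[of x] tr01[of y] one_one
  by (auto simp: \<omega>_def tr_add sgn2_def)

lemma omega_alt: "\<omega> x = (1 + \<i>) / 2 + (1 - \<i>) / 2 * sgn2 (tr n x)"
  using tr01[of x] by (auto simp: \<omega>_def sgn2_def field_simps)

lemma omega_nz[simp]: "\<omega> x \<noteq> 0" by (simp add: \<omega>_def)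

definition \<psi> :: "'a \<Rightarrow> complex" where "\<psi> x = sgn2 (Qfun n x) * \<omega> x"

lemma psi_nz[simp]: "\<psi> x \<noteq> 0" by (simp add: \<psi>_def)

lemma psi_add: "\<psi> (x + y) = \<psi> x * \<psi> y * sgn2 (tr n (x * y))"
proof -
  have "\<psi> (x + y) = sgn2 (Qfun n x) * sgn2 (Qfun n y) * sgn2 (tr n x * tr n y) * sgn2 (tr n (x * y))
        * (\<omega> x * \<omega> y * sgn2 (tr n x * tr n y))"
    by (simp add: \<psi>_def Q_add omega_add)
  also have "\<dots> = \<psi> x * \<psi> y * sgn2 (tr n (x * y)) * (sgn2 (tr n x * tr n y) * sgn2 (tr n x * tr n y))"
    by (simp add: \<psi>_def algebra_simps)
  finally show ?thesis by simp
qed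

definition \<chi> :: "'a \<Rightarrow> complex" where "\<chi> x = \<i> ^ wt n \<alpha> x / \<psi> x"

lemma chi_add: "\<chi> (x + y) = \<chi> x * \<chi> y"
  by (simp add: \<chi>_def ipow_add psi_add)

lemma A0: "A 0 = {}" by (simp add: A_def)

lemma Q0: "Qfun n (0::'a) = 0"
  by (simp add: Qfun_def power_0_left tr_def)

lemma chi0: "\<chi> 0 = 1"
  by (simp add: \<chi>_def wt_eq A0 \<psi>_def Q0 \<omega>_def sgn2_def)

lemma E_insert: "finite S \<Longrightarrow> i \<notin> S \<Longrightarrow> E (insert i S) = \<alpha> i + E S"
  by (simp add: E_def)

lemma chi_E: "finite S \<Longrightarrow> \<chi> (E S) = (\<Prod>i\<in>S. \<chi> (\<alpha> i))"
proof (induction S rule: finite_induct)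
  case empty then show ?case by (simp add: E_def chi0)
next
  case (insert i S) then show ?case by (simp add: E_insert chi_add)
qed

lemma chi_pm: "\<chi> x = 1 \<or> \<chi> x = -1"
proof -
  have "\<chi> x * \<chi> x = 1" using chi_add[of x x] chi0 by simp
  then show ?thesis by (metis power2_eq_square power2_eq_1_iff)
qed

definition \<Lambda> :: "nat set" where "\<Lambda> = {i. i < n \<and> \<chi> (\<alpha> i) = -1}"
definition lam :: 'a where "lam = E \<Lambda>"

lemma A_lam: "A lam = \<Lambda>" unfolding lam_def by (rule A_E) (auto simp: \<Lambda>_def)

lemma chi_lam: "\<chi> x = sgn2 (tr n (lam * x))"
proof -
  have "\<chi> x = \<chi> (E (A x))" by (simp add: E_A)
  also have "\<dots> = (\<Prod>i\<in>A x. \<chi> (\<alpha> i))" by (simp add: chi_E)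
  also have "\<dots> = (\<Prod>i\<in>A x. if i \<in> \<Lambda> then -1 else 1)"
  proof (intro prod.cong refl)
    fix i assume "i \<in> A x"
    then have "i < n" using A_sub by blast
    then show "\<chi> (\<alpha> i) = (if i \<in> \<Lambda> then -1 else 1)"
      using chi_pm[of "\<alpha> i"] by (auto simp: \<Lambda>_def)
  qed
  also have "\<dots> = (-1) ^ card (A x \<inter> \<Lambda>)"
    by (simp add: prod.If_cases Int_def)
  also have "\<dots> = sgn2 (tr n (lam * x))"
    by (simp add: tr_mul_card sgn2_of_nat A_lam Int_commute)
  finally show ?thesis .
qed

lemma ipow_decomp: "\<i> ^ wt n \<alpha> x = sgn2 (tr n (lam * x)) * sgn2 (Qfun n x) * \<omega> x"
proof -
  have "\<i> ^ wt n \<alpha> x = \<chi> x * \<psi> x" by (simp add: \<chi>_def)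
  then show ?thesis by (simp add: chi_lam \<psi>_def)
qed

lemma nega_expand:
  assumes h: "\<And>x. B (h x)"
  shows "nega_walsh n \<alpha> h \<mu> = (1 + \<i>) / 2 * walsh n (\<lambda>x. h x + Qfun n x) (\<mu> + lam)
          + (1 - \<i>) / 2 * walsh n (\<lambda>x. h x + Qfun n x) (\<mu> + lam + 1)"
proof -
  have pt: "sgn2 (h x + tr n (\<mu> * x)) * \<i> ^ wt n \<alpha> x =
      (1 + \<i>) / 2 * sgn2 (h x + Qfun n x + tr n ((\<mu> + lam) * x))
      + (1 - \<i>) / 2 * sgn2 (h x + Qfun n x + tr n ((\<mu> + lam + 1) * x))" for x
    using h[of x] by (simp add: ipow_decomp omega_alt distrib_right tr_add algebra_simps)
  show ?thesis
    unfolding nega_walsh_def walsh_def pt by (simp add: sum.distrib sum_distrib_left)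
qed

definition wi :: "('a \<Rightarrow> 'a) \<Rightarrow> 'a \<Rightarrow> int" where
  "wi g \<mu> = (\<Sum>x\<in>UNIV. if g x + tr n (\<mu> * x) = 0 then 1 else -1)"

lemma walsh_wi: "walsh n g \<mu> = of_int (wi g \<mu>)"
  unfolding walsh_def wi_def sgn2_def of_int_sum by (intro sum.cong refl) simp

lemma bent_iff: "bent n g \<longleftrightarrow> (\<forall>\<mu>. (wi g \<mu>)^2 = 2^n)"
  unfolding bent_def walsh_wi cmod_int_iff ..

lemma negabent_iff: assumes h: "\<And>x. B (h x)"
  shows "negabent n \<alpha> h \<longleftrightarrow> bent n (\<lambda>x. h x + Qfun n x)"
proof -
  let ?g = "\<lambda>x. h x + Qfun n x"
  have "negabent n \<alpha> h \<longleftrightarrow> (\<forall>\<mu>. (wi ?g (\<mu> + lam))^2 + (wi ?g (\<mu> + lam + 1))^2 = 2^(n+1))"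
    unfolding negabent_def nega_expand[OF h] walsh_wi cmod_mix_iff ..
  also have "\<dots> \<longleftrightarrow> (\<forall>\<mu>. (wi ?g \<mu>)^2 = 2^n)"
  proof
    assume H: "\<forall>\<mu>. (wi ?g (\<mu> + lam))^2 + (wi ?g (\<mu> + lam + 1))^2 = 2^(n+1)"
    have p4: "(4::int)^m = 2^n"
    proof -
      have "(4::int)^m = 2^(2*m)" by (simp add: power_mult)
      then show ?thesis using nmm by (simp add: mult_2)
    qed
    show "\<forall>\<mu>. (wi ?g \<mu>)^2 = 2^n"
    proof
      fix \<nu>
      have "(wi ?g \<nu>)^2 + (wi ?g (\<nu> + 1))^2 = 2^(n+1)"
        using H[rule_format, of "\<nu> + lam"] by (simp add: add.assoc)
      then have "(wi ?g \<nu>)^2 + (wi ?g (\<nu> + 1))^2 = 2 * 4^m"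
        using p4 by simp
      then have "(wi ?g \<nu>)^2 = 4^m" by (rule int_sq_lemma)
      then show "(wi ?g \<nu>)^2 = 2^n" using p4 by simp
    qed
  next
    assume H: "\<forall>\<mu>. (wi ?g \<mu>)^2 = 2^n"
    then show "\<forall>\<mu>. (wi ?g (\<mu> + lam))^2 + (wi ?g (\<mu> + lam + 1))^2 = 2^(n+1)" by simp
  qed
  also have "\<dots> \<longleftrightarrow> bent n ?g" by (simp add: bent_iff)
  finally show ?thesis .
qed

lemma main:
  assumes f: "\<forall>x. f x \<in> {0, 1}"
  shows "bent_negabent n \<alpha> f \<longleftrightarrow> bent_negabent n \<alpha> (\<lambda>x. f x + Qfun n x)"
proof -
  have fB: "\<And>x. B (f x)" using f by (auto simp: B_def)
  have gB: "\<And>x. B (f x + Qfun n x)" using fB by simp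
  have "(\<lambda>x. f x + Qfun n x + Qfun n x) = f" by (simp add: add.assoc)
  then show ?thesis
    unfolding bent_negabent_def negabent_iff[OF fB] negabent_iff[OF gB] by auto
qed

end

theorem corollary2:
  fixes n :: nat and \<alpha> :: "nat \<Rightarrow> 'a::{field,finite}" and f :: "'a \<Rightarrow> 'a"
  assumes "n \<ge> 2" and "even n"
    and "card (UNIV :: 'a set) = 2 ^ n"
    and "self_dual_basis n \<alpha>"
    and "\<forall>x. f x \<in> {0, 1}"
  shows "bent_negabent n \<alpha> f \<longleftrightarrow> bent_negabent n \<alpha> (\<lambda>x. f x + Qfun n x)"
proof -
  interpret F2n n \<alpha> using assms(1-4) by unfold_locales
  show ?thesis using main[OF assms(5)] .
qed

end
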